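(* Let $A$ be a synaptic algebra and $p,q\in P$. Let $r:=(p\vee q)\wedge(p\vee q^{\perp})\wedge(p^{\perp}\vee q)\wedge(p^{\perp}\vee q^{\perp})$, $r_p:=p\wedge(p^{\perp}\vee q)\wedge(p^{\perp}\vee q^{\perp})$, $r_{p^{\perp}}:=p^{\perp}\wedge(p\vee q)\wedge(p\vee q^{\perp})$, $r_q:=q\wedge(p\vee q^{\perp})\wedge(p^{\perp}\vee q^{\perp})$, $r_{q^{\perp}}:=q^{\perp}\wedge(p\vee q)\wedge(p^{\perp}\vee q)$, $c:=(pqp+p^{\perp}q^{\perp}p^{\perp})^{1/2}$, $s:=(pq^{\perp}p+p^{\perp}qp^{\perp})^{1/2}$, and $c_r:=(r_pr_qr_p+r_{p^{\perp}}r_{q^{\perp}}r_{p^{\perp}})^{1/2}$, $s_r:=(r_pr_{q^{\perp}}r_p+r_{p^{\perp}}r_qr_{p^{\perp}})^{1/2}$. Then: (i) $c_r=cr=rc$ and $s_r=sr=rs$; (ii) $c=c_r+|(p\wedge q)-(p^{\perp}\wedge q^{\perp})|$ and $s=s_r+|(p\wedge q^{\perp})-(p^{\perp}\wedge q)|$.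
   Context: Synaptic algebra (Foulis): $R$ is a real linear associative algebra with unit $1$, and $A\subseteq R$ is a real linear subspace with $1\in A$. For $a,b\in A$ write $aCb$ iff $ab=ba$; $C(a):=\{b\in A: aCb\}$; $CC(a):=\{b\in A: bCd \text{ for all } d\in C(a)\}$. $A$ is a synaptic algebra with enveloping algebra $R$ iff: (SA1) $A$ is a partially ordered archimedean real linear space with positive cone $A^+$, $1$ is an order unit, $\|\cdot\|$ the order-unit norm; (SA2) $a\in A\Rightarrow a^2\in A^+$; (SA3) $a,b\in A^+\Rightarrow aba\in A^+$; (SA4) if $a\in A$, $b\in A^+$, $aba=0$ then $ab=ba=0$; (SA5) if $a\in A^+$ there is $b\in A^+\cap CC(a)$ with $b^2=a$; (SA6) for $a\in A$ there is $p=p^2\in A$ with $ab=0\Leftrightarrow pb=0$ for all $b\in A$; (SA7) if $1\le a$ there is $b\in A$ with $ab=ba=1$; (SA8) if $a,b\in A$, $a_1\le a_2\le\cdots$ are pairwise commuting elements of $C(b)$ with $\|a-a_n\|\to0$, then $a\in C(b)$. $A$ is nondegenerate. Products are computed in $R$. $P:=\{p\in A:p=p^2\}$ with the inherited order is an orthomodular lattice with $p^{\perp}:=1-p$, meet $\wedge$, join $\vee$. For $0\le a$, $a^{1/2}$ is its unique positive square root in $A$; $|a|:=(a^2)^{1/2}$. *)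

theory Defs
  imports Complex_Main
begin

text \<open>The enveloping algebra R is the type 'a of class
real_algebra_1 (real, associative, unital; nondegenerate since 0 \<noteq> 1).
A is a subset of R, Pos is the positive cone A^+, and a \<le> b means b - a \<in> Pos.\<close>

definition sa_le :: "'a::real_algebra_1 set \<Rightarrow> 'a \<Rightarrow> 'a \<Rightarrow> bool" where
  "sa_le Pos a b \<longleftrightarrow> b - a \<in> Pos"

definition commutes :: "'a::real_algebra_1 \<Rightarrow> 'a \<Rightarrow> bool" where
  "commutes a b \<longleftrightarrow> a * b = b * a"

definition commutant :: "'a::real_algebra_1 set \<Rightarrow> 'a \<Rightarrow> 'a set" where
  "commutant A a = {b \<in> A. commutes a b}"

definition bicommutant :: "'a::real_algebra_1 set \<Rightarrow> 'a \<Rightarrow> 'a set" where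
  "bicommutant A a = {b \<in> A. \<forall>d \<in> commutant A a. commutes b d}"

definition ou_norm :: "'a::real_algebra_1 set \<Rightarrow> 'a \<Rightarrow> real" where
  "ou_norm Pos a = Inf {l. 0 \<le> l \<and> sa_le Pos (- (l *\<^sub>R 1)) a \<and> sa_le Pos a (l *\<^sub>R 1)}"

definition projs :: "'a::real_algebra_1 set \<Rightarrow> 'a set" where
  "projs A = {p \<in> A. p * p = p}"

definition synaptic_algebra :: "'a::real_algebra_1 set \<Rightarrow> 'a set \<Rightarrow> bool" where
  "synaptic_algebra A Pos \<longleftrightarrow>
    \<comment> \<open>A is a real linear subspace of R containing 1\<close>
    0 \<in> A \<and> 1 \<in> A \<and> (\<forall>a\<in>A. \<forall>b\<in>A. a + b \<in> A) \<and> (\<forall>t. \<forall>a\<in>A. t *\<^sub>R a \<in> A) \<and>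
    \<comment> \<open>SA1: partially ordered (positive cone), archimedean, 1 order unit\<close>
    Pos \<subseteq> A \<and> (\<forall>a\<in>Pos. \<forall>b\<in>Pos. a + b \<in> Pos) \<and>
    (\<forall>t\<ge>0. \<forall>a\<in>Pos. t *\<^sub>R a \<in> Pos) \<and> (\<forall>a. a \<in> Pos \<and> - a \<in> Pos \<longrightarrow> a = 0) \<and>
    (\<forall>a\<in>A. \<forall>b\<in>A. (\<forall>n::nat. sa_le Pos (of_nat n *\<^sub>R a) b) \<longrightarrow> sa_le Pos a 0) \<and>
    (\<forall>a\<in>A. \<exists>n::nat. sa_le Pos a (of_nat n *\<^sub>R 1)) \<and>
    \<comment> \<open>SA2\<close>
    (\<forall>a\<in>A. a * a \<in> Pos) \<and>
    \<comment> \<open>SA3\<close>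
    (\<forall>a\<in>Pos. \<forall>b\<in>Pos. a * b * a \<in> Pos) \<and>
    \<comment> \<open>SA4\<close>
    (\<forall>a\<in>A. \<forall>b\<in>Pos. a * b * a = 0 \<longrightarrow> a * b = 0 \<and> b * a = 0) \<and>
    \<comment> \<open>SA5\<close>
    (\<forall>a\<in>Pos. \<exists>b\<in>Pos \<inter> bicommutant A a. b * b = a) \<and>
    \<comment> \<open>SA6\<close>
    (\<forall>a\<in>A. \<exists>p\<in>projs A. \<forall>b\<in>A. a * b = 0 \<longleftrightarrow> p * b = 0) \<and>
    \<comment> \<open>SA7\<close>
    (\<forall>a\<in>A. sa_le Pos 1 a \<longrightarrow> (\<exists>b\<in>A. a * b = 1 \<and> b * a = 1)) \<and>
    \<comment> \<open>SA8\<close>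
    (\<forall>a\<in>A. \<forall>b\<in>A. \<forall>s::nat \<Rightarrow> 'a.
       (\<forall>n. s n \<in> commutant A b) \<and> (\<forall>m n. commutes (s m) (s n)) \<and>
       (\<forall>n. sa_le Pos (s n) (s (Suc n))) \<and>
       (\<lambda>n. ou_norm Pos (a - s n)) \<longlonglongrightarrow> 0
       \<longrightarrow> a \<in> commutant A b)"

definition perp :: "'a::real_algebra_1 \<Rightarrow> 'a" where
  "perp p = 1 - p"

definition pmeet :: "'a::real_algebra_1 set \<Rightarrow> 'a set \<Rightarrow> 'a \<Rightarrow> 'a \<Rightarrow> 'a" where
  "pmeet A Pos p q = (THE r. r \<in> projs A \<and> sa_le Pos r p \<and> sa_le Pos r q \<and>
      (\<forall>s\<in>projs A. sa_le Pos s p \<and> sa_le Pos s q \<longrightarrow> sa_le Pos s r))"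

definition pjoin :: "'a::real_algebra_1 set \<Rightarrow> 'a set \<Rightarrow> 'a \<Rightarrow> 'a \<Rightarrow> 'a" where
  "pjoin A Pos p q = (THE r. r \<in> projs A \<and> sa_le Pos p r \<and> sa_le Pos q r \<and>
      (\<forall>s\<in>projs A. sa_le Pos p s \<and> sa_le Pos q s \<longrightarrow> sa_le Pos r s))"

definition sa_sqrt :: "'a::real_algebra_1 set \<Rightarrow> 'a \<Rightarrow> 'a" where
  "sa_sqrt Pos a = (THE b. b \<in> Pos \<and> b * b = a)"

definition sa_abs :: "'a::real_algebra_1 set \<Rightarrow> 'a \<Rightarrow> 'a" where
  "sa_abs Pos a = sa_sqrt Pos (a * a)"

end

theory Submission
  imports Defs
begin


locale sa =
  fixes A Pos :: "'a::real_algebra_1 set"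
  assumes SA: "synaptic_algebra A Pos"
begin

lemmas SAu = SA[unfolded synaptic_algebra_def]

lemma A0: "0 \<in> A" using SAu[THEN conjunct1] by blast
lemma A1: "1 \<in> A" using SAu[THEN conjunct2, THEN conjunct1] by blast
lemma Aadd: "a \<in> A \<Longrightarrow> b \<in> A \<Longrightarrow> a + b \<in> A" using SAu[THEN conjunct2, THEN conjunct2, THEN conjunct1] by blast
lemma Asc: "a \<in> A \<Longrightarrow> t *\<^sub>R a \<in> A" using SAu[THEN conjunct2, THEN conjunct2, THEN conjunct2, THEN conjunct1] by blast
lemma PosA: "x \<in> Pos \<Longrightarrow> x \<in> A" using SAu[THEN conjunct2, THEN conjunct2, THEN conjunct2, THEN conjunct2, THEN conjunct1] by blast
lemma pos_add: "a \<in> Pos \<Longrightarrow> b \<in> Pos \<Longrightarrow> a + b \<in> Pos" using SAu[THEN conjunct2, THEN conjunct2, THEN conjunct2, THEN conjunct2, THEN conjunct2, THEN conjunct1] by blast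
lemma pointed: "a \<in> Pos \<Longrightarrow> - a \<in> Pos \<Longrightarrow> a = 0" using SAu[THEN conjunct2, THEN conjunct2, THEN conjunct2, THEN conjunct2, THEN conjunct2, THEN conjunct2, THEN conjunct2, THEN conjunct1] by blast
lemma sq_pos: "a \<in> A \<Longrightarrow> a * a \<in> Pos" using SAu[THEN conjunct2, THEN conjunct2, THEN conjunct2, THEN conjunct2, THEN conjunct2, THEN conjunct2, THEN conjunct2, THEN conjunct2, THEN conjunct2, THEN conjunct2, THEN conjunct1] by blast
lemma sa3: "a \<in> Pos \<Longrightarrow> b \<in> Pos \<Longrightarrow> a * b * a \<in> Pos" using SAu[THEN conjunct2, THEN conjunct2, THEN conjunct2, THEN conjunct2, THEN conjunct2, THEN conjunct2, THEN conjunct2, THEN conjunct2, THEN conjunct2, THEN conjunct2, THEN conjunct2, THEN conjunct1] by blast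
lemma sa4: "a \<in> A \<Longrightarrow> b \<in> Pos \<Longrightarrow> a * b * a = 0 \<Longrightarrow> a * b = 0 \<and> b * a = 0" using SAu[THEN conjunct2, THEN conjunct2, THEN conjunct2, THEN conjunct2, THEN conjunct2, THEN conjunct2, THEN conjunct2, THEN conjunct2, THEN conjunct2, THEN conjunct2, THEN conjunct2, THEN conjunct2, THEN conjunct1] by blast
lemma sa5: "a \<in> Pos \<Longrightarrow> \<exists>b\<in>Pos \<inter> bicommutant A a. b * b = a" using SAu[THEN conjunct2, THEN conjunct2, THEN conjunct2, THEN conjunct2, THEN conjunct2, THEN conjunct2, THEN conjunct2, THEN conjunct2, THEN conjunct2, THEN conjunct2, THEN conjunct2, THEN conjunct2, THEN conjunct2, THEN conjunct1] by blast
lemma sa6: "a \<in> A \<Longrightarrow> \<exists>p\<in>projs A. \<forall>b\<in>A. a * b = 0 \<longleftrightarrow> p * b = 0" using SAu[THEN conjunct2, THEN conjunct2, THEN conjunct2, THEN conjunct2, THEN conjunct2, THEN conjunct2, THEN conjunct2, THEN conjunct2, THEN conjunct2, THEN conjunct2, THEN conjunct2, THEN conjunct2, THEN conjunct2, THEN conjunct2, THEN conjunct1] by blast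

lemma Aneg: "a \<in> A \<Longrightarrow> - a \<in> A"
  using Asc[of a "-1"] by simp

lemma Adiff: "a \<in> A \<Longrightarrow> b \<in> A \<Longrightarrow> a - b \<in> A"
proof -
  assume "a \<in> A" "b \<in> A"
  hence "a + - b \<in> A" using Aadd Aneg by blast
  thus ?thesis by simp
qed

lemma one_pos: "1 \<in> Pos" using sq_pos[OF A1] by simp

lemma zero_sq: "x \<in> A \<Longrightarrow> x * x = 0 \<Longrightarrow> x = 0"
  using sa4[OF _ one_pos, of x] by simp

lemma pos_sum_zero: "a \<in> Pos \<Longrightarrow> b \<in> Pos \<Longrightarrow> a + b = 0 \<Longrightarrow> a = 0"
  using pointed[of a] by (metis add_eq_0_iff minus_minus)

lemma root_eq:
  assumes b: "b \<in> Pos" "b * b = a" and d: "d \<in> Pos" "d \<in> bicommutant A a" "d * d = a"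
  shows "b = d"
proof -
  have bA: "b \<in> A" and dA: "d \<in> A" using b d PosA by auto
  have "a * b = b * a" using b(2) by (metis mult.assoc)
  hence "b \<in> commutant A a" using bA unfolding commutant_def commutes_def by simp
  hence db: "d * b = b * d" using d(2) unfolding bicommutant_def commutes_def by auto
  define x where "x = b - d"
  have xA: "x \<in> A" unfolding x_def using Adiff bA dA by auto
  have xbd: "x * (b + d) = 0" unfolding x_def using b(2) d(3) db
    by (simp add: algebra_simps)
  have xb: "x * b = b * x" unfolding x_def using db by (simp add: algebra_simps)
  have xd: "x * d = d * x" unfolding x_def using db by (simp add: algebra_simps)
  have xxA: "x * x \<in> A" using sq_pos[OF xA] PosA by auto
  obtain u where u: "u \<in> Pos" "u \<in> bicommutant A b" "u * u = b" using sa5[OF b(1)] by auto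
  obtain v where v: "v \<in> Pos" "v \<in> bicommutant A d" "v * v = d" using sa5[OF d(1)] by auto
  have "x * x * b = b * (x * x)" using xb by (metis mult.assoc)
  hence "x * x \<in> commutant A b" using xxA unfolding commutant_def commutes_def by simp
  hence ux: "u * (x * x) = (x * x) * u" using u(2) unfolding bicommutant_def commutes_def by auto
  have "x * x * d = d * (x * x)" using xd by (metis mult.assoc)
  hence "x * x \<in> commutant A d" using xxA unfolding commutant_def commutes_def by simp
  hence vx: "v * (x * x) = (x * x) * v" using v(2) unfolding bicommutant_def commutes_def by auto
  have P1: "x * x * b \<in> Pos"
  proof -
    have "u * (x * x) * u \<in> Pos" using sa3[OF u(1) sq_pos[OF xA]] .
    also have "u * (x * x) * u = x * x * b" using ux u(3) by (metis mult.assoc)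
    finally show ?thesis .
  qed
  have P2: "x * x * d \<in> Pos"
  proof -
    have "v * (x * x) * v \<in> Pos" using sa3[OF v(1) sq_pos[OF xA]] .
    also have "v * (x * x) * v = x * x * d" using vx v(3) by (metis mult.assoc)
    finally show ?thesis .
  qed
  have "x * x * b + x * x * d = 0" using xbd by (metis distrib_left mult.assoc mult_zero_right)
  hence Z1: "x * x * b = 0" using pos_sum_zero P1 P2 by blast
  hence Z2: "x * x * d = 0" using \<open>x * x * b + x * x * d = 0\<close> by simp
  have "x * b * x = 0" using Z1 xb by (metis mult.assoc)
  hence "x * b = 0" using sa4[OF xA b(1)] by auto
  moreover have "x * d * x = 0" using Z2 xd by (metis mult.assoc)
  hence "x * d = 0" using sa4[OF xA d(1)] by auto
  ultimately have "x * x = 0" unfolding x_def by (simp add: algebra_simps)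
  hence "x = 0" using zero_sq xA by auto
  thus ?thesis unfolding x_def by simp
qed

lemma sqrt_unique:
  assumes "b \<in> Pos" "b * b = a" shows "sa_sqrt Pos a = b"
proof -
  have aP: "a \<in> Pos" using assms sq_pos PosA by auto
  obtain d where d: "d \<in> Pos" "d \<in> bicommutant A a" "d * d = a" using sa5[OF aP] by auto
  have "b = d" using root_eq[OF assms d] .
  have U: "y = d" if "y \<in> Pos \<and> y * y = a" for y using root_eq[OF _ _ d] that by blast
  show ?thesis unfolding sa_sqrt_def
  proof (rule the_equality)
    show "b \<in> Pos \<and> b * b = a" using assms by simp
    fix y assume "y \<in> Pos \<and> y * y = a" thus "y = b" using U \<open>b = d\<close> by simp
  qed
qed

lemma sqrt_props:
  assumes "a \<in> Pos"
  shows "sa_sqrt Pos a \<in> Pos" "sa_sqrt Pos a \<in> bicommutant A a" "sa_sqrt Pos a * sa_sqrt Pos a = a"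
proof -
  obtain d where d: "d \<in> Pos" "d \<in> bicommutant A a" "d * d = a" using sa5[OF assms] by auto
  have "sa_sqrt Pos a = d" using sqrt_unique d by blast
  thus "sa_sqrt Pos a \<in> Pos" "sa_sqrt Pos a \<in> bicommutant A a" "sa_sqrt Pos a * sa_sqrt Pos a = a"
    using d by auto
qed

lemma sqrt_comm:
  assumes "a \<in> Pos" "e \<in> A" "e * a = a * e"
  shows "sa_sqrt Pos a * e = e * sa_sqrt Pos a"
proof -
  have "e \<in> commutant A a" using assms unfolding commutant_def commutes_def by auto
  thus ?thesis using sqrt_props(2)[OF assms(1)] unfolding bicommutant_def commutes_def by auto
qed

lemma projsD: "p \<in> projs A \<Longrightarrow> p \<in> A" "p \<in> projs A \<Longrightarrow> p * p = p"
  unfolding projs_def by auto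

lemma proj_pos: "p \<in> projs A \<Longrightarrow> p \<in> Pos"
  using sq_pos projsD by metis

lemma proj_perp: "p \<in> projs A \<Longrightarrow> 1 - p \<in> projs A"
  unfolding projs_def using Adiff A1 by (auto simp: algebra_simps)

lemma right_left:
  assumes "x \<in> Pos" "y \<in> projs A" "x * y = x" shows "y * x = x"
proof -
  have "x * (1 - y) = 0" using assms by (simp add: algebra_simps)
  hence "(1 - y) * x * (1 - y) = 0" by (simp add: mult.assoc)
  hence "(1 - y) * x = 0" using sa4[OF proj_perp[OF assms(2), THEN projsD(1)] assms(1)] by auto
  thus ?thesis by (simp add: algebra_simps)
qed

lemma le_proj:
  assumes x: "x \<in> projs A" and y: "y \<in> projs A"
  shows "sa_le Pos x y \<longleftrightarrow> x * y = x"
proof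
  assume "sa_le Pos x y"
  hence yx: "y - x \<in> Pos" unfolding sa_le_def .
  have py: "1 - y \<in> Pos" using proj_pos proj_perp y by auto
  have yy: "y * y = y" using projsD y by auto
  have "(1 - y) * (y - x) * (1 - y) \<in> Pos" using sa3[OF py yx] .
  also have "(1 - y) * (y - x) * (1 - y) = - ((1 - y) * x * (1 - y))"
    using yy by (simp add: algebra_simps)
  finally have "(1 - y) * x * (1 - y) = 0"
    using pointed sa3[OF py proj_pos[OF x]] by blast
  hence "x * (1 - y) = 0" using sa4[OF proj_perp[OF y, THEN projsD(1)] proj_pos[OF x]] by auto
  thus "x * y = x" by (simp add: algebra_simps)
next
  assume xy: "x * y = x"
  have yx: "y * x = x" using right_left[OF proj_pos[OF x] y xy] .
  have "(y - x) * (y - x) = y - x" using xy yx projsD x y by (simp add: algebra_simps)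
  moreover have "(y - x) * (y - x) \<in> Pos" using sq_pos Adiff projsD x y by auto
  ultimately show "sa_le Pos x y" unfolding sa_le_def by simp
qed

lemma le_antisym: "sa_le Pos x y \<Longrightarrow> sa_le Pos y x \<Longrightarrow> x = y"
  unfolding sa_le_def using pointed[of "y - x"] by simp

definition is_meet where
  "is_meet m p q \<longleftrightarrow> m \<in> projs A \<and> sa_le Pos m p \<and> sa_le Pos m q \<and>
      (\<forall>s\<in>projs A. sa_le Pos s p \<and> sa_le Pos s q \<longrightarrow> sa_le Pos s m)"

lemma meet_exists:
  assumes p: "p \<in> projs A" and q: "q \<in> projs A"
  shows "\<exists>m. is_meet m p q"
proof -
  have pp: "1 - p \<in> projs A" "1 - q \<in> projs A" using proj_perp p q by auto
  have aA: "(1 - p) + (1 - q) \<in> A" using Aadd pp projsD by auto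
  obtain e where e: "e \<in> projs A" "\<forall>b\<in>A. ((1 - p) + (1 - q)) * b = 0 \<longleftrightarrow> e * b = 0"
    using sa6[OF aA] by blast
  have me: "1 - e \<in> projs A" using proj_perp e by auto
  have "e * (1 - e) = 0" using projsD[OF e(1)] by (simp add: algebra_simps)
  hence "((1 - p) + (1 - q)) * (1 - e) = 0" using e(2) projsD(1)[OF me] by blast
  hence "(1 - e) * (1 - p) * (1 - e) + (1 - e) * (1 - q) * (1 - e) = 0"
    by (metis distrib_left distrib_right mult.assoc mult_zero_right)
  hence z1: "(1 - e) * (1 - p) * (1 - e) = 0" and z2: "(1 - e) * (1 - q) * (1 - e) = 0"
    using pos_sum_zero[OF sa3[OF proj_pos[OF me] proj_pos[OF pp(1)]] sa3[OF proj_pos[OF me] proj_pos[OF pp(2)]]]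
    by (auto simp: add.commute)
  have "(1 - e) * (1 - p) = 0" using sa4[OF projsD(1)[OF me] proj_pos[OF pp(1)] z1] by auto
  hence lp: "(1 - e) * p = 1 - e" by (simp add: algebra_simps)
  have "(1 - e) * (1 - q) = 0" using sa4[OF projsD(1)[OF me] proj_pos[OF pp(2)] z2] by auto
  hence lq: "(1 - e) * q = 1 - e" by (simp add: algebra_simps)
  have "is_meet (1 - e) p q" unfolding is_meet_def
  proof (intro conjI ballI impI)
    show "1 - e \<in> projs A" by fact
    show "sa_le Pos (1 - e) p" using le_proj me p lp by auto
    show "sa_le Pos (1 - e) q" using le_proj me q lq by auto
  next
    fix s assume s: "s \<in> projs A" and "sa_le Pos s p \<and> sa_le Pos s q"
    hence "s * p = s" "s * q = s" using le_proj p q by auto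
    hence "p * s = s" "q * s = s" using right_left proj_pos s p q by auto
    hence "((1 - p) + (1 - q)) * s = 0" by (simp add: algebra_simps mult_2)
    hence "e * s = 0" using e(2) projsD(1)[OF s] by blast
    hence "s * e * s = 0" by (simp add: mult.assoc)
    hence "s * e = 0" using sa4[OF projsD(1)[OF s] proj_pos[OF e(1)]] by auto
    hence "s * (1 - e) = s" by (simp add: algebra_simps)
    thus "sa_le Pos s (1 - e)" using le_proj s me by auto
  qed
  thus ?thesis by blast
qed

lemma pmeet_is:
  assumes "p \<in> projs A" "q \<in> projs A"
  shows "is_meet (pmeet A Pos p q) p q"
proof -
  obtain m where m: "is_meet m p q" using meet_exists assms by blast
  have u: "\<And>y. is_meet y p q \<Longrightarrow> y = m" using m le_antisym unfolding is_meet_def by blast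
  show ?thesis unfolding pmeet_def using m u[unfolded is_meet_def] m[unfolded is_meet_def]
    by (smt (verit, del_insts) is_meet_def the_equality)
qed

lemma pmeet_eq: "p \<in> projs A \<Longrightarrow> q \<in> projs A \<Longrightarrow> is_meet m p q \<Longrightarrow> pmeet A Pos p q = m"
  using pmeet_is le_antisym unfolding is_meet_def by blast

lemma pmeet_props:
  assumes p: "p \<in> projs A" and q: "q \<in> projs A"
  shows "pmeet A Pos p q \<in> projs A" "pmeet A Pos p q * p = pmeet A Pos p q"
    "p * pmeet A Pos p q = pmeet A Pos p q" "pmeet A Pos p q * q = pmeet A Pos p q"
    "q * pmeet A Pos p q = pmeet A Pos p q"
proof -
  let ?m = "pmeet A Pos p q"
  have M: "?m \<in> projs A" "sa_le Pos ?m p" "sa_le Pos ?m q" using pmeet_is[OF p q] unfolding is_meet_def by auto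
  have a: "?m * p = ?m" using le_proj[OF M(1) p] M(2) by simp
  have b: "?m * q = ?m" using le_proj[OF M(1) q] M(3) by simp
  show "?m \<in> projs A" "?m * p = ?m" "?m * q = ?m" by fact+
  show "p * ?m = ?m" using right_left[OF proj_pos[OF M(1)] p a] .
  show "q * ?m = ?m" using right_left[OF proj_pos[OF M(1)] q b] .
qed

lemma pmeet_comm:
  assumes f: "f \<in> projs A" and g: "g \<in> projs A" and fg: "f * g = g * f"
  shows "pmeet A Pos f g = f * g"
proof (rule pmeet_eq[OF f g])
  have ff: "f * f = f" and gg: "g * g = g" using projsD f g by auto
  have fgp: "f * g \<in> projs A" unfolding projs_def mem_Collect_eq
  proof (rule conjI)
    have "f * g = g * f * g" using fg gg by (metis mult.assoc)
    moreover have "g * f * g \<in> Pos" using sa3 proj_pos f g by blast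
    ultimately show "f * g \<in> A" using PosA by auto
    have "f * g * (f * g) = f * (g * f) * g" by (simp add: mult.assoc)
    thus "f * g * (f * g) = f * g" using fg ff gg by (metis mult.assoc)
  qed
  show "is_meet (f * g) f g" unfolding is_meet_def
  proof (intro conjI ballI impI)
    show "f * g \<in> projs A" by fact
    show "sa_le Pos (f * g) f" using le_proj[OF fgp f] fg ff by (metis mult.assoc)
    show "sa_le Pos (f * g) g" using le_proj[OF fgp g] gg by (metis mult.assoc)
  next
    fix s assume s: "s \<in> projs A" and "sa_le Pos s f \<and> sa_le Pos s g"
    hence "s * f = s" "s * g = s" using le_proj f g by auto
    hence "s * (f * g) = s" by (metis mult.assoc)
    thus "sa_le Pos s (f * g)" using le_proj s fgp by auto
  qed
qed

lemma pjoin_eq: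
  assumes p: "p \<in> projs A" and q: "q \<in> projs A"
  shows "pjoin A Pos p q = 1 - pmeet A Pos (1 - p) (1 - q)"
proof -
  let ?m = "pmeet A Pos (1 - p) (1 - q)"
  have M: "is_meet ?m (1 - p) (1 - q)" using pmeet_is proj_perp p q by auto
  have flip: "\<And>x y. sa_le Pos (1 - x) (1 - y) \<longleftrightarrow> sa_le Pos y x" unfolding sa_le_def
    by (simp add: algebra_simps)
  have flip2: "\<And>x y. sa_le Pos x (1 - y) \<longleftrightarrow> sa_le Pos y (1 - x)" unfolding sa_le_def
    by (simp add: algebra_simps)
  have J: "1 - ?m \<in> projs A \<and> sa_le Pos p (1 - ?m) \<and> sa_le Pos q (1 - ?m) \<and>
      (\<forall>s\<in>projs A. sa_le Pos p s \<and> sa_le Pos q s \<longrightarrow> sa_le Pos (1 - ?m) s)"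
  proof (intro conjI ballI impI)
    show "1 - ?m \<in> projs A" using M proj_perp unfolding is_meet_def by auto
    show "sa_le Pos p (1 - ?m)" using M flip2[of p ?m] unfolding is_meet_def by auto
    show "sa_le Pos q (1 - ?m)" using M flip2[of q ?m] unfolding is_meet_def by auto
  next
    fix s assume s: "s \<in> projs A" "sa_le Pos p s \<and> sa_le Pos q s"
    hence "sa_le Pos (1 - s) (1 - p) \<and> sa_le Pos (1 - s) (1 - q)" using flip by auto
    hence "sa_le Pos (1 - s) ?m" using M proj_perp[OF s(1)] unfolding is_meet_def by auto
    thus "sa_le Pos (1 - ?m) s" using flip[of ?m "1 - s"] by simp
  qed
  show ?thesis unfolding pjoin_def
  proof (rule the_equality)
    show "1 - ?m \<in> projs A \<and> sa_le Pos p (1 - ?m) \<and> sa_le Pos q (1 - ?m) \<and>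
      (\<forall>s\<in>projs A. sa_le Pos p s \<and> sa_le Pos q s \<longrightarrow> sa_le Pos (1 - ?m) s)" by (rule J)
    fix y assume "y \<in> projs A \<and> sa_le Pos p y \<and> sa_le Pos q y \<and>
      (\<forall>s\<in>projs A. sa_le Pos p s \<and> sa_le Pos q s \<longrightarrow> sa_le Pos y s)"
    thus "y = 1 - ?m" using J le_antisym by blast
  qed
qed

lemma sqrt_proj:
  assumes C: "C \<in> Pos" and e: "e \<in> projs A" and Ce: "C * e = e * C"
  shows "C * e = e \<Longrightarrow> sa_sqrt Pos C * e = e" "C * e = 0 \<Longrightarrow> sa_sqrt Pos C * e = 0"
proof -
  let ?c = "sa_sqrt Pos C"
  have eA: "e \<in> A" using projsD e by auto
  have cc: "?c * ?c = C" "?c \<in> Pos" using sqrt_props C by auto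
  have ce: "?c * e = e * ?c" using sqrt_comm[OF C eA Ce[symmetric]] by simp
  have ee: "e * e = e" using projsD e by auto
  have "?c * e = e * ?c * e" using ce ee by (metis mult.assoc)
  hence cP: "?c * e \<in> Pos" using sa3[OF proj_pos[OF e] cc(2)] by simp
  have sq: "(?c * e) * (?c * e) = C * e" using ce ee cc by (metis mult.assoc)
  show "C * e = e \<Longrightarrow> ?c * e = e"
  proof -
    assume "C * e = e"
    hence "sa_sqrt Pos e = ?c * e" using sqrt_unique[OF cP] sq by simp
    moreover have "sa_sqrt Pos e = e" using sqrt_unique[OF proj_pos[OF e] ee] .
    ultimately show ?thesis by simp
  qed
  show "C * e = 0 \<Longrightarrow> ?c * e = 0" using zero_sq[of "?c * e"] sq PosA[OF cP] by simp
qed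

end

lemma hz1: "x*(1-y) = x \<Longrightarrow> x*y = (0::'a::ring_1)"
proof -
  assume h: "x*(1-y) = x"
  have "x*y = x - x*(1-y)" by (simp add: algebra_simps)
  thus ?thesis using h by simp
qed
lemma hz2: "(1-y)*x = x \<Longrightarrow> y*x = (0::'a::ring_1)"
proof -
  assume h: "(1-y)*x = x"
  have "y*x = x - (1-y)*x" by (simp add: algebra_simps)
  thus ?thesis using h by simp
qed
lemma orth_a: "x*f = x \<Longrightarrow> f*y = 0 \<Longrightarrow> x*y = (0::'a::ring)" by (metis mult.assoc mult_zero_right)
lemma orth_b: "x*f = 0 \<Longrightarrow> f*y = y \<Longrightarrow> x*y = (0::'a::ring)" by (metis mult.assoc mult_zero_left)


theorem theorem6p7:
  fixes A Pos :: "'a::real_algebra_1 set" and p q :: 'a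
  assumes SA: "synaptic_algebra A Pos"
    and p: "p \<in> projs A" and q: "q \<in> projs A"
  defines "r \<equiv> pmeet A Pos (pjoin A Pos p q)
                 (pmeet A Pos (pjoin A Pos p (perp q))
                   (pmeet A Pos (pjoin A Pos (perp p) q) (pjoin A Pos (perp p) (perp q))))"
    and "c \<equiv> sa_sqrt Pos (p * q * p + perp p * perp q * perp p)"
    and "s \<equiv> sa_sqrt Pos (p * perp q * p + perp p * q * perp p)"
    and "cr \<equiv> sa_sqrt Pos ((pmeet A Pos p (pmeet A Pos (pjoin A Pos (perp p) q) (pjoin A Pos (perp p) (perp q)))) * (pmeet A Pos q (pmeet A Pos (pjoin A Pos p (perp q)) (pjoin A Pos (perp p) (perp q)))) * (pmeet A Pos p (pmeet A Pos (pjoin A Pos (perp p) q) (pjoin A Pos (perp p) (perp q))))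
                 + (pmeet A Pos (perp p) (pmeet A Pos (pjoin A Pos p q) (pjoin A Pos p (perp q)))) * (pmeet A Pos (perp q) (pmeet A Pos (pjoin A Pos p q) (pjoin A Pos (perp p) q))) * (pmeet A Pos (perp p) (pmeet A Pos (pjoin A Pos p q) (pjoin A Pos p (perp q)))))"
    and "sr \<equiv> sa_sqrt Pos ((pmeet A Pos p (pmeet A Pos (pjoin A Pos (perp p) q) (pjoin A Pos (perp p) (perp q)))) * (pmeet A Pos (perp q) (pmeet A Pos (pjoin A Pos p q) (pjoin A Pos (perp p) q))) * (pmeet A Pos p (pmeet A Pos (pjoin A Pos (perp p) q) (pjoin A Pos (perp p) (perp q))))
                 + (pmeet A Pos (perp p) (pmeet A Pos (pjoin A Pos p q) (pjoin A Pos p (perp q)))) * (pmeet A Pos q (pmeet A Pos (pjoin A Pos p (perp q)) (pjoin A Pos (perp p) (perp q)))) * (pmeet A Pos (perp p) (pmeet A Pos (pjoin A Pos p q) (pjoin A Pos p (perp q)))))"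
  shows "(cr = c * r \<and> c * r = r * c \<and> sr = s * r \<and> s * r = r * s) \<and>
         (c = cr + sa_abs Pos (pmeet A Pos p q - pmeet A Pos (perp p) (perp q)) \<and>
          s = sr + sa_abs Pos (pmeet A Pos p (perp q) - pmeet A Pos (perp p) q))"
  proof -
  interpret sa A Pos by (rule sa.intro[OF SA])
  let ?p' = "1 - p" and ?q' = "1 - q"
  have pA: "p \<in> A" "p * p = p" and qA: "q \<in> A" "q * q = q" using projsD p q by auto
  have p': "?p' \<in> projs A" and q': "?q' \<in> projs A" using proj_perp p q by auto
  define e1 where "e1 = pmeet A Pos p q"
  define e2 where "e2 = pmeet A Pos ?p' ?q'"
  define e3 where "e3 = pmeet A Pos p ?q'"
  define e4 where "e4 = pmeet A Pos ?p' q"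
  note m1 = pmeet_props[OF p q, folded e1_def]
  note m2 = pmeet_props[OF p' q', folded e2_def]
  note m3 = pmeet_props[OF p q', folded e3_def]
  note m4 = pmeet_props[OF p' q, folded e4_def]
  have r1: "e1 * p = e1" "p * e1 = e1" "e1 * q = e1" "q * e1 = e1" "e1 * e1 = e1"
    using m1(2-5) projsD(2)[OF m1(1)] by auto
  have r2: "e2 * p = 0" "p * e2 = 0" "e2 * q = 0" "q * e2 = 0" "e2 * e2 = e2"
    using hz1[OF m2(2)] hz2[OF m2(3)] hz1[OF m2(4)] hz2[OF m2(5)] projsD(2)[OF m2(1)] by auto
  have r3: "e3 * p = e3" "p * e3 = e3" "e3 * q = 0" "q * e3 = 0" "e3 * e3 = e3"
    using m3(2,3) hz1[OF m3(4)] hz2[OF m3(5)] projsD(2)[OF m3(1)] by auto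
  have r4: "e4 * p = 0" "p * e4 = 0" "e4 * q = e4" "q * e4 = e4" "e4 * e4 = e4"
    using hz1[OF m4(2)] hz2[OF m4(3)] m4(4,5) projsD(2)[OF m4(1)] by auto
  have o1: "e1 * e2 = 0" "e2 * e1 = 0" "e1 * e3 = 0" "e3 * e1 = 0" "e1 * e4 = 0" "e4 * e1 = 0"
    "e2 * e3 = 0" "e3 * e2 = 0" "e2 * e4 = 0" "e4 * e2 = 0" "e3 * e4 = 0" "e4 * e3 = 0"
    using orth_a[OF r1(1) r2(2)] orth_b[OF r2(1) r1(2)] orth_a[OF r1(3) r3(4)] orth_b[OF r3(3) r1(4)]
      orth_a[OF r1(1) r4(2)] orth_b[OF r4(1) r1(2)] orth_b[OF r2(1) r3(2)] orth_a[OF r3(1) r2(2)]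
      orth_b[OF r2(3) r4(4)] orth_a[OF r4(3) r2(4)] orth_a[OF r3(1) r4(2)] orth_b[OF r4(1) r3(2)]
    by auto
  have rr: "x * y = z \<Longrightarrow> x * (y * w) = z * w" for x y z w :: 'a by (simp add: mult.assoc[symmetric])
  note R = r1 r2 r3 r4 o1 rr[OF r1(1)] rr[OF r1(2)] rr[OF r1(3)] rr[OF r1(4)] rr[OF r1(5)]
    rr[OF r2(1)] rr[OF r2(2)] rr[OF r2(3)] rr[OF r2(4)] rr[OF r2(5)]
    rr[OF r3(1)] rr[OF r3(2)] rr[OF r3(3)] rr[OF r3(4)] rr[OF r3(5)]
    rr[OF r4(1)] rr[OF r4(2)] rr[OF r4(3)] rr[OF r4(4)] rr[OF r4(5)]
    rr[OF pA(2)] rr[OF qA(2)] pA(2) qA(2)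
  have pr: "perp x = 1 - x" for x :: 'a unfolding perp_def ..
  have j1: "pjoin A Pos p q = 1 - e2" using pjoin_eq[OF p q] e2_def by simp
  have j2: "pjoin A Pos p ?q' = 1 - e4" using pjoin_eq[OF p q'] e4_def by simp
  have j3: "pjoin A Pos ?p' q = 1 - e3" using pjoin_eq[OF p' q] e3_def by simp
  have j4: "pjoin A Pos ?p' ?q' = 1 - e1" using pjoin_eq[OF p' q'] e1_def by simp
  have pe: "1 - e1 \<in> projs A" "1 - e2 \<in> projs A" "1 - e3 \<in> projs A" "1 - e4 \<in> projs A"
    using proj_perp m1 m2 m3 m4 by auto
  have ok: "x * y = y * x \<Longrightarrow> pmeet A Pos x y = x * y" if "x \<in> projs A" "y \<in> projs A" for x y
    by (rule pmeet_comm[OF that])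
  have g13: "pmeet A Pos (1-e3) (1-e1) = 1 - e1 - e3"
    using ok[OF pe(3) pe(1)] by (simp add: algebra_simps R)
  have g14: "pmeet A Pos (1-e4) (1-e1) = 1 - e1 - e4"
    using ok[OF pe(4) pe(1)] by (simp add: algebra_simps R)
  have g24: "pmeet A Pos (1-e2) (1-e4) = 1 - e2 - e4"
    using ok[OF pe(2) pe(4)] by (simp add: algebra_simps R)
  have g23: "pmeet A Pos (1-e2) (1-e3) = 1 - e2 - e3"
    using ok[OF pe(2) pe(3)] by (simp add: algebra_simps R)
  have g13p: "1 - e1 - e3 \<in> projs A" using pmeet_props(1)[OF pe(3) pe(1)] g13 by simp
  have g14p: "1 - e1 - e4 \<in> projs A" using pmeet_props(1)[OF pe(4) pe(1)] g14 by simp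
  have g24p: "1 - e2 - e4 \<in> projs A" using pmeet_props(1)[OF pe(2) pe(4)] g24 by simp
  have g23p: "1 - e2 - e3 \<in> projs A" using pmeet_props(1)[OF pe(2) pe(3)] g23 by simp
  have g134: "pmeet A Pos (1-e4) (1 - e1 - e3) = 1 - e1 - e3 - e4"
    using ok[OF pe(4) g13p] by (simp add: algebra_simps R)
  have g134p: "1 - e1 - e3 - e4 \<in> projs A" using pmeet_props(1)[OF pe(4) g13p] g134 by simp
  define RR where "RR = 1 - e1 - e2 - e3 - e4"
  have gR: "pmeet A Pos (1-e2) (1 - e1 - e3 - e4) = RR"
    using ok[OF pe(2) g134p] unfolding RR_def by (simp add: algebra_simps R)
  have RRp: "RR \<in> projs A" using pmeet_props(1)[OF pe(2) g134p] gR by simp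
  have rRR: "r = RR" unfolding r_def pr j1 j2 j3 j4 g13 g134 gR ..
  have hp: "pmeet A Pos p (1 - e1 - e3) = p - e1 - e3"
    using ok[OF p g13p] by (simp add: algebra_simps R)
  have hq: "pmeet A Pos q (1 - e1 - e4) = q - e1 - e4"
    using ok[OF q g14p] by (simp add: algebra_simps R)
  have hp': "pmeet A Pos (1 - p) (1 - e2 - e4) = 1 - p - e2 - e4"
    using ok[OF p' g24p] by (simp add: algebra_simps R)
  have hq': "pmeet A Pos (1 - q) (1 - e2 - e3) = 1 - q - e2 - e3"
    using ok[OF q' g23p] by (simp add: algebra_simps R)
  define C where "C = p * q * p + (1 - p) * (1 - q) * (1 - p)"
  define S where "S = p * (1 - q) * p + (1 - p) * q * (1 - p)"
  have RRc: "x * RR = RR * x" if "x * e1 = e1 * x" "x * e2 = e2 * x" "x * e3 = e3 * x" "x * e4 = e4 * x" for x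
    unfolding RR_def using that by (simp add: algebra_simps)
  have pR: "p * RR = RR * p" using RRc R by simp
  have qR: "q * RR = RR * q" using RRc R by simp
  have p'R: "(1-p) * RR = RR * (1-p)" using pR by (simp add: algebra_simps)
  have q'R: "(1-q) * RR = RR * (1-q)" using qR by (simp add: algebra_simps)
  have RR2: "RR * RR = RR" using RRp projsD by auto
  have pair: "(x * RR) * (y * RR) = x * y * RR" if "y * RR = RR * y" for x y
  proof -
    have "(x * RR) * (y * RR) = x * (RR * (RR * y))" using that by (simp add: mult.assoc)
    also have "... = x * ((RR * RR) * y)" by (simp only: mult.assoc)
    also have "... = x * (RR * y)" using RR2 by simp
    also have "... = x * y * RR" using that by (simp add: mult.assoc)
    finally show ?thesis .
  qed
  have tri: "(x * RR) * (y * RR) * (z * RR) = x * y * z * RR" if "y * RR = RR * y" "z * RR = RR * z" for x y z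
    using pair[OF that(1)] pair[OF that(2)] by simp
  have hP: "p - e1 - e3 = p * RR" unfolding RR_def by (simp add: algebra_simps R)
  have hQ: "q - e1 - e4 = q * RR" unfolding RR_def by (simp add: algebra_simps R)
  have hP': "1 - p - e2 - e4 = (1 - p) * RR" unfolding RR_def by (simp add: algebra_simps R)
  have hQ': "1 - q - e2 - e3 = (1 - q) * RR" unfolding RR_def by (simp add: algebra_simps R)
  have crarg: "(p - e1 - e3) * (q - e1 - e4) * (p - e1 - e3) + (1 - p - e2 - e4) * (1 - q - e2 - e3) * (1 - p - e2 - e4) = C * RR"
  proof -
    have "(p - e1 - e3) * (q - e1 - e4) * (p - e1 - e3) + (1 - p - e2 - e4) * (1 - q - e2 - e3) * (1 - p - e2 - e4)
       = p * q * p * RR + (1 - p) * (1 - q) * (1 - p) * RR"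
      by (simp only: hP hQ hP' hQ' tri[OF qR pR] tri[OF q'R p'R])
    thus ?thesis unfolding C_def by (simp only: distrib_right)
  qed
  have srarg: "(p - e1 - e3) * (1 - q - e2 - e3) * (p - e1 - e3) + (1 - p - e2 - e4) * (q - e1 - e4) * (1 - p - e2 - e4) = S * RR"
  proof -
    have "(p - e1 - e3) * (1 - q - e2 - e3) * (p - e1 - e3) + (1 - p - e2 - e4) * (q - e1 - e4) * (1 - p - e2 - e4)
       = p * (1 - q) * p * RR + (1 - p) * q * (1 - p) * RR"
      by (simp only: hP hQ hP' hQ' tri[OF q'R pR] tri[OF qR p'R])
    thus ?thesis unfolding S_def by (simp only: distrib_right)
  qed
  have cdef: "c = sa_sqrt Pos C" unfolding c_def C_def pr ..
  have sdef: "s = sa_sqrt Pos S" unfolding s_def S_def pr ..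
  have crdef: "cr = sa_sqrt Pos (C * RR)"
    unfolding cr_def pr j1 j2 j3 j4 g13 g14 g24 g23 hp hq hp' hq' crarg ..
  have srdef: "sr = sa_sqrt Pos (S * RR)"
    unfolding sr_def pr j1 j2 j3 j4 g13 g14 g24 g23 hp hq hp' hq' srarg ..
  have CP: "C \<in> Pos" unfolding C_def
    using pos_add sa3 proj_pos p q p' q' by blast
  have SP: "S \<in> Pos" unfolding S_def
    using pos_add sa3 proj_pos p q p' q' by blast
  have Ce: "C * e1 = e1" "e1 * C = e1" "C * e2 = e2" "e2 * C = e2"
    "C * e3 = 0" "e3 * C = 0" "C * e4 = 0" "e4 * C = 0"
    unfolding C_def by (simp_all add: algebra_simps R)
  have Se: "S * e1 = 0" "e1 * S = 0" "S * e2 = 0" "e2 * S = 0"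
    "S * e3 = e3" "e3 * S = e3" "S * e4 = e4" "e4 * S = e4"
    unfolding S_def by (simp_all add: algebra_simps R)
  have CR: "C * RR = RR * C" using RRc Ce by simp
  have SR: "S * RR = RR * S" using RRc Se by simp
  have RRA: "RR \<in> A" using RRp projsD by auto
  have RRP: "RR \<in> Pos" using RRp proj_pos by auto
  have main: "sa_sqrt Pos (X * RR) = sa_sqrt Pos X * RR \<and> sa_sqrt Pos X * RR = RR * sa_sqrt Pos X"
    if XP: "X \<in> Pos" and XR: "X * RR = RR * X" for X
  proof -
    let ?x = "sa_sqrt Pos X"
    have xx: "?x \<in> Pos" "?x * ?x = X" using sqrt_props[OF XP] by auto
    have xR: "?x * RR = RR * ?x" using sqrt_comm[OF XP RRA XR[symmetric]] .
    have "RR * ?x * RR = ?x * RR"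
      using xR RR2 by (metis mult.assoc)
    hence P: "?x * RR \<in> Pos" using sa3[OF RRP xx(1)] by simp
    have "(?x * RR) * (?x * RR) = X * RR" using pair[OF xR] xx by simp
    hence "sa_sqrt Pos (X * RR) = ?x * RR" by (rule sqrt_unique[OF P])
    thus ?thesis using xR by simp
  qed
  have ecomm: "e * C = C * e" "e * S = S * e" if "e \<in> {e1, e2, e3, e4}" for e
    using that Ce Se by auto
  have c1: "sa_sqrt Pos C * e1 = e1" using sqrt_proj(1)[OF CP m1(1)] Ce by simp
  have c2: "sa_sqrt Pos C * e2 = e2" using sqrt_proj(1)[OF CP m2(1)] Ce by simp
  have c3: "sa_sqrt Pos C * e3 = 0" using sqrt_proj(2)[OF CP m3(1)] Ce by simp
  have c4: "sa_sqrt Pos C * e4 = 0" using sqrt_proj(2)[OF CP m4(1)] Ce by simp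
  have s1: "sa_sqrt Pos S * e1 = 0" using sqrt_proj(2)[OF SP m1(1)] Se by simp
  have s2: "sa_sqrt Pos S * e2 = 0" using sqrt_proj(2)[OF SP m2(1)] Se by simp
  have s3: "sa_sqrt Pos S * e3 = e3" using sqrt_proj(1)[OF SP m3(1)] Se by simp
  have s4: "sa_sqrt Pos S * e4 = e4" using sqrt_proj(1)[OF SP m4(1)] Se by simp
  have one: "1 = RR + e1 + e2 + e3 + e4" unfolding RR_def by simp
  have decomp: "x = x * RR + x * e1 + x * e2 + x * e3 + x * e4" for x :: 'a
  proof -
    have "x = x * (RR + e1 + e2 + e3 + e4)" using one by (metis mult_1_right)
    thus ?thesis by (simp add: distrib_left)
  qed
  have abs12: "sa_abs Pos (e1 - e2) = e1 + e2"
  proof -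
    have sq: "(e1 + e2) * (e1 + e2) = e1 + e2" by (simp add: algebra_simps R)
    have "e1 + e2 \<in> A" using Aadd projsD m1(1) m2(1) by auto
    hence P: "e1 + e2 \<in> Pos" using sq_pos sq by metis
    have "(e1 - e2) * (e1 - e2) = e1 + e2" by (simp add: algebra_simps R)
    thus ?thesis unfolding sa_abs_def using sqrt_unique[OF P sq] by (simp only:)
  qed
  have abs34: "sa_abs Pos (e3 - e4) = e3 + e4"
  proof -
    have sq: "(e3 + e4) * (e3 + e4) = e3 + e4" by (simp add: algebra_simps R)
    have "e3 + e4 \<in> A" using Aadd projsD m3(1) m4(1) by auto
    hence P: "e3 + e4 \<in> Pos" using sq_pos sq by metis
    have "(e3 - e4) * (e3 - e4) = e3 + e4" by (simp add: algebra_simps R)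
    thus ?thesis unfolding sa_abs_def using sqrt_unique[OF P sq] by (simp only:)
  qed
  have cfin: "c = cr + (e1 + e2)"
    using decomp[of c] c1 c2 c3 c4 main[OF CP CR] cdef crdef by (simp add: add.assoc)
  have sfin: "s = sr + (e3 + e4)"
    using decomp[of s] s1 s2 s3 s4 main[OF SP SR] sdef srdef
    by (metis add.assoc add.commute add_0_right)
  have M: "pmeet A Pos p q = e1" "pmeet A Pos (perp p) (perp q) = e2"
    "pmeet A Pos p (perp q) = e3" "pmeet A Pos (perp p) q = e4"
    unfolding e1_def e2_def e3_def e4_def pr by auto
  show ?thesis unfolding M abs12 abs34 rRR
    using cfin sfin main[OF CP CR] main[OF SP SR] cdef sdef crdef srdef by simp
qed

end
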